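(* Let $G$ and $H$ be finite abelian groups, written additively, of the same even order $k>2$, let $f:G\to H$ be semi-planar, and suppose $S(G,H;f)$ splits into two substructures $S_1$ and $S_2$ with $\mathcal{L}(0,0)\in S_1$. For $i=1,2$ and $a\in G$ let $P_a^i=\{b\in H : \mathcal{L}(a,b)\in S_i\}$. If $a,c\in G$ and $P_a^i\cap P_c^i\neq\varnothing$ for $i=1$ or $i=2$, then $P_{a-c}^1=P_{c-a}^1=P_0^1$.
   Context: A function $f:G\to H$ is semi-planar if for every non-identity $a\in G$ and every $y\in H$, the equation $f(x+a)-f(x)=y$ has either $0$ or $2$ solutions $x\in G$. The incidence structure $S(G,H;f)$ has points $(x,y)\in G\times H$ and lines $\mathcal{L}(a,b)$ for $(a,b)\in G\times H$, with $(x,y)$ incident with $\mathcal{L}(a,b)$ iff $y=f(x-a)+b$. Its incidence graph is the bipartite graph on points and lines with an edge for each incident pair. $S(G,H;f)$ splits into two substructures $S_1,S_2$ if its incidence graph has exactly two connected components; $S_1,S_2$ are the incidence structures formed by the points and lines of the two components, and $\mathcal{L}(a,b)\in S_i$ means the line lies in component $S_i$. *)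

theory Defs
  imports Main
begin

definition semi_planar :: "('g::{ab_group_add,finite} \<Rightarrow> 'h::{ab_group_add,finite}) \<Rightarrow> bool" where
  "semi_planar f \<longleftrightarrow>
     (\<forall>a. a \<noteq> 0 \<longrightarrow> (\<forall>y. card {x. f (x + a) - f x = y} \<in> {0, 2}))"

text \<open>Vertices of the incidence graph: points Inl (x,y) and lines Inr (a,b).\<close>
type_synonym ('g,'h) vertex = "('g \<times> 'h) + ('g \<times> 'h)"

definition incident :: "('g::ab_group_add \<Rightarrow> 'h::ab_group_add) \<Rightarrow> 'g \<times> 'h \<Rightarrow> 'g \<times> 'h \<Rightarrow> bool" where
  "incident f p l \<longleftrightarrow> snd p = f (fst p - fst l) + snd l"

definition inc_edge :: "('g::ab_group_add \<Rightarrow> 'h::ab_group_add) \<Rightarrow> ('g,'h) vertex \<Rightarrow> ('g,'h) vertex \<Rightarrow> bool" where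
  "inc_edge f u v \<longleftrightarrow>
     (\<exists>p l. (u = Inl p \<and> v = Inr l \<or> u = Inr l \<and> v = Inl p) \<and> incident f p l)"

definition inc_conn :: "('g::ab_group_add \<Rightarrow> 'h::ab_group_add) \<Rightarrow> ('g,'h) vertex rel" where
  "inc_conn f = {(u, v). (inc_edge f)\<^sup>*\<^sup>* u v}"

definition components :: "('g::ab_group_add \<Rightarrow> 'h::ab_group_add) \<Rightarrow> ('g,'h) vertex set set" where
  "components f = UNIV // inc_conn f"

text \<open>S(G,H;f) splits into two substructures: exactly two connected components.\<close>
definition splits_in_two :: "('g::ab_group_add \<Rightarrow> 'h::ab_group_add) \<Rightarrow> bool" where
  "splits_in_two f \<longleftrightarrow> card (components f) = 2"

text \<open>S_1 is the component containing the line L(0,0); S_2 the other one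
  (when there are exactly two components, it is the complement of S_1).\<close>
definition substr :: "('g::ab_group_add \<Rightarrow> 'h::ab_group_add) \<Rightarrow> nat \<Rightarrow> ('g,'h) vertex set" where
  "substr f i = (if i = 1 then inc_conn f `` {Inr (0, 0)} else - (inc_conn f `` {Inr (0, 0)}))"

definition Pset :: "('g::ab_group_add \<Rightarrow> 'h::ab_group_add) \<Rightarrow> nat \<Rightarrow> 'g \<Rightarrow> 'h set" where
  "Pset f i a = {b. Inr (a, b) \<in> substr f i}"

end

theory Submission
  imports Defs
begin

definition trv :: "'g::ab_group_add \<Rightarrow> 'h::ab_group_add \<Rightarrow> ('g,'h) vertex \<Rightarrow> ('g,'h) vertex" where
  "trv u v w = (case w of Inl p \<Rightarrow> Inl (fst p + u, snd p + v) | Inr l \<Rightarrow> Inr (fst l + u, snd l + v))"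

lemma trv_Inr[simp]: "trv u v (Inr (a,b)) = Inr (a+u, b+v)"
  by (simp add: trv_def)

lemma edge_trv: "inc_edge f u v \<Longrightarrow> inc_edge f (trv s t u) (trv s t v)"
  unfolding inc_edge_def incident_def trv_def
  by (auto simp: algebra_simps)

lemma conn_trv: "(inc_edge f)\<^sup>*\<^sup>* u v \<Longrightarrow> (inc_edge f)\<^sup>*\<^sup>* (trv s t u) (trv s t v)"
proof (induction rule: rtranclp_induct)
  case base then show ?case by simp
next
  case (step y z) then show ?case
    by (meson edge_trv rtranclp.rtrancl_into_rtrancl)
qed

lemma edge_sym: "inc_edge f u v \<Longrightarrow> inc_edge f v u"
  unfolding inc_edge_def by blast

lemma conn_sym: "(inc_edge f)\<^sup>*\<^sup>* u v \<Longrightarrow> (inc_edge f)\<^sup>*\<^sup>* v u"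
proof (induction rule: rtranclp_induct)
  case base then show ?case by simp
next
  case (step y z) then show ?case
    by (meson edge_sym converse_rtranclp_into_rtranclp)
qed

lemma equiv_conn: "equiv UNIV (inc_conn f)"
  unfolding equiv_def refl_on_def sym_def trans_def inc_conn_def
  by (auto intro: conn_sym rtranclp_trans)

definition inS :: "('g::ab_group_add \<Rightarrow> 'h::ab_group_add) \<Rightarrow> 'g \<Rightarrow> 'h \<Rightarrow> bool" where
  "inS f a b = (inc_edge f)\<^sup>*\<^sup>* (Inr (0,0)) (Inr (a,b))"

lemma Pset1: "Pset f 1 a = {b. inS f a b}"
  by (simp add: Pset_def substr_def inS_def inc_conn_def)

lemma Pset2: "Pset f 2 a = {b. \<not> inS f a b}"
  by (simp add: Pset_def substr_def inS_def inc_conn_def)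

lemma inS_add: "inS f a b \<Longrightarrow> inS f c d \<Longrightarrow> inS f (a+c) (b+d)"
proof -
  assume 1: "inS f a b" and 2: "inS f c d"
  from conn_trv[OF 2[unfolded inS_def], of a b]
  have "(inc_edge f)\<^sup>*\<^sup>* (Inr (a,b)) (Inr (a+c,b+d))" by (simp add: add.commute)
  with 1 show ?thesis unfolding inS_def by (meson rtranclp_trans)
qed

lemma inS_neg: "inS f a b \<Longrightarrow> inS f (-a) (-b)"
proof -
  assume 1: "inS f a b"
  from conn_trv[OF 1[unfolded inS_def], of "-a" "-b"]
  have "(inc_edge f)\<^sup>*\<^sup>* (Inr (-a,-b)) (Inr (0,0))" by simp
  then show ?thesis unfolding inS_def by (rule conn_sym)
qed

lemma inS_two:
  fixes f :: "'g::{ab_group_add,finite} \<Rightarrow> 'h::{ab_group_add,finite}"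
  assumes "splits_in_two f" "\<not> inS f a b" "\<not> inS f c d"
  shows "inS f (a-c) (b-d)"
proof -
  let ?r = "inc_conn f"
  have eq: "equiv UNIV ?r" by (rule equiv_conn)
  have rc: "(inc_edge f)\<^sup>*\<^sup>* (Inr (a,b)) (Inr (c,d))"
  proof (rule ccontr)
    assume n: "\<not> ?thesis"
    let ?A = "?r `` {Inr (0,0)}" and ?B = "?r `` {Inr (a,b)}" and ?C = "?r `` {Inr (c,d)}"
    have AB: "?A \<noteq> ?B" using eq_equiv_class_iff[OF eq] assms(2)
      unfolding inS_def inc_conn_def by blast
    have AC: "?A \<noteq> ?C" using eq_equiv_class_iff[OF eq] assms(3)
      unfolding inS_def inc_conn_def by blast
    have BC: "?B \<noteq> ?C" using eq_equiv_class_iff[OF eq] n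
      unfolding inc_conn_def by blast
    have sub: "{?A, ?B, ?C} \<subseteq> components f"
      unfolding components_def by (auto intro: quotientI)
    have fin: "finite (components f)" by simp
    have "card {?A, ?B, ?C} = 3" using AB AC BC by simp
    then have "3 \<le> card (components f)" using card_mono[OF fin sub] by simp
    with assms(1) show False unfolding splits_in_two_def by simp
  qed
  from conn_trv[OF rc, of "-c" "-d"]
  have "(inc_edge f)\<^sup>*\<^sup>* (Inr (a-c,b-d)) (Inr (0,0))" by simp
  then show ?thesis unfolding inS_def by (rule conn_sym)
qed

theorem lemma5:
  fixes f :: "'g::{ab_group_add,finite} \<Rightarrow> 'h::{ab_group_add,finite}"
    and a c :: 'g
  assumes "card (UNIV :: 'g set) = card (UNIV :: 'h set)"
    and "even (card (UNIV :: 'g set))"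
    and "card (UNIV :: 'g set) > 2"
    and "semi_planar f"
    and "splits_in_two f"
    and "\<exists>i\<in>{1::nat, 2}. Pset f i a \<inter> Pset f i c \<noteq> {}"
  shows "Pset f 1 (a - c) = Pset f 1 0 \<and> Pset f 1 (c - a) = Pset f 1 0"
proof -
  have k: "inS f (a-c) 0"
  proof -
    from assms(6) obtain i b where i: "i \<in> {1::nat,2}" "b \<in> Pset f i a" "b \<in> Pset f i c" by blast
    show ?thesis
    proof (cases "i = 1")
      case True
      with i have "inS f a b" "inS f c b" using Pset1[of f a] Pset1[of f c] by auto
      from inS_add[OF this(1) inS_neg[OF this(2)]] show ?thesis by simp
    next
      case False
      with i have "\<not> inS f a b" "\<not> inS f c b" by (auto simp: Pset2)
      from inS_two[OF assms(5) this] show ?thesis by simp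
    qed
  qed
  have k2: "inS f (c-a) 0" using inS_neg[OF k] by simp
  have gen: "Pset f 1 d = Pset f 1 0" if "inS f d 0" for d
  proof -
    have "inS f d b \<longleftrightarrow> inS f 0 b" for b
    proof
      assume "inS f d b" from inS_add[OF this inS_neg[OF that]] show "inS f 0 b" by simp
    next
      assume "inS f 0 b" from inS_add[OF this that] show "inS f d b" by simp
    qed
    then show ?thesis unfolding Pset1 by blast
  qed
  show ?thesis using gen[OF k] gen[OF k2] by simp
qed

end
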